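(* Let $H$ be a graph with vertex set $A\cup B\cup\{v\}$, where $A$, $B$, $\{v\}$ are pairwise disjoint, $A$ is an independent set or a clique, $A$ and $B$ are complete to each other, and $v$ has both a neighbour and a non-neighbour in $A$. Let $F$ be a spanning subgraph of $H$ obtained from $H$ by removing some (possibly all) of the edges between $v$ and vertices of $A$. Then $H\xrightarrow{\cap} F$.
   Context: All graphs are finite and simple. For graphs $G_1=(V_1,E_1)$, $G_2=(V_2,E_2)$, $G_1\cap G_2=(V_1\cap V_2, E_1\cap E_2)$. For a graph $G=(V,E)$ and an injective map $\alpha$ on $V$, $G^{\alpha}$ has vertex set $\alpha(V)$ and edge set $\{\{\alpha(v),\alpha(w)\}: \{v,w\}\in E\}$. We write $G\xrightarrow{\cap} H$ if $H=G^{\alpha_1}\cap\cdots\cap G^{\alpha_k}$ for some $k\ge1$ and injective maps $\alpha_1,\dots,\alpha_k$ on $V(G)$. Sets are complete to each other if every vertex of one is adjacent to every vertex of the other. *)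

theory Defs
  imports Main
begin

type_synonym 'a graph = "'a set \<times> 'a set set"

definition simple_graph :: "'a graph \<Rightarrow> bool" where
  "simple_graph G \<longleftrightarrow> finite (fst G) \<and>
     (\<forall>e\<in>snd G. \<exists>x y. x \<noteq> y \<and> x \<in> fst G \<and> y \<in> fst G \<and> e = {x, y})"

definition adj :: "'a graph \<Rightarrow> 'a \<Rightarrow> 'a \<Rightarrow> bool" where
  "adj G x y \<longleftrightarrow> {x, y} \<in> snd G"

definition independent_set :: "'a graph \<Rightarrow> 'a set \<Rightarrow> bool" where
  "independent_set G S \<longleftrightarrow> (\<forall>x\<in>S. \<forall>y\<in>S. \<not> adj G x y)"

definition clique :: "'a graph \<Rightarrow> 'a set \<Rightarrow> bool" where
  "clique G S \<longleftrightarrow> (\<forall>x\<in>S. \<forall>y\<in>S. x \<noteq> y \<longrightarrow> adj G x y)"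

definition complete_to :: "'a graph \<Rightarrow> 'a set \<Rightarrow> 'a set \<Rightarrow> bool" where
  "complete_to G S T \<longleftrightarrow> (\<forall>x\<in>S. \<forall>y\<in>T. adj G x y)"

definition graph_image :: "('a \<Rightarrow> 'a) \<Rightarrow> 'a graph \<Rightarrow> 'a graph" where
  "graph_image \<alpha> G = (\<alpha> ` fst G, (\<lambda>e. \<alpha> ` e) ` snd G)"

definition graph_Inter :: "nat \<Rightarrow> (nat \<Rightarrow> 'a graph) \<Rightarrow> 'a graph" where
  "graph_Inter k Gs = (\<Inter>i\<in>{..<k}. fst (Gs i), \<Inter>i\<in>{..<k}. snd (Gs i))"

definition inter_derives :: "'a graph \<Rightarrow> 'a graph \<Rightarrow> bool" where
  "inter_derives G H \<longleftrightarrow> (\<exists>k \<ge> 1. \<exists>\<alpha> :: nat \<Rightarrow> 'a \<Rightarrow> 'a.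
      (\<forall>i<k. inj_on (\<alpha> i) (fst G)) \<and> H = graph_Inter k (\<lambda>i. graph_image (\<alpha> i) G))"

end

theory Submission
  imports Defs
begin

definition tr :: "'a \<Rightarrow> 'a \<Rightarrow> 'a \<Rightarrow> 'a" where
  "tr a m x = (if x = a then m else if x = m then a else x)"

lemma tr_tr[simp]: "tr a m (tr a m x) = x"
  by (auto simp: tr_def)

lemma tr_inj: "inj (tr a m)"
  by (metis injI tr_tr)

lemma tr_img: "a \<in> S \<Longrightarrow> m \<in> S \<Longrightarrow> tr a m ` S = S"
  by (auto simp: tr_def image_iff)

lemma tr_img_img[simp]: "tr a m ` (tr a m ` e) = e"
  by (simp add: image_image)

lemma mem_img_tr: "e \<in> (\<lambda>e. tr a m ` e) ` E \<longleftrightarrow> tr a m ` e \<in> E"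
proof
  assume "e \<in> (\<lambda>e. tr a m ` e) ` E"
  then obtain e' where "e' \<in> E" "e = tr a m ` e'" by blast
  thus "tr a m ` e \<in> E" by simp
next
  assume "tr a m ` e \<in> E"
  hence "tr a m ` (tr a m ` e) \<in> (\<lambda>e. tr a m ` e) ` E" by (rule imageI)
  thus "e \<in> (\<lambda>e. tr a m ` e) ` E" by simp
qed

lemma key:
  fixes H :: "'a graph"
  assumes sg: "simple_graph H"
    and V: "fst H = A \<union> B \<union> {v}"
    and "A \<inter> B = {}" and "v \<notin> A" and "v \<notin> B"
    and hom: "independent_set H A \<or> clique H A"
    and ct: "complete_to H A B"
    and aA: "a \<in> A" and va: "adj H v a"
    and mA: "m \<in> A" and vm: "\<not> adj H v m"
    and e: "e \<in> snd H" and ne: "e \<noteq> {v, a}"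
  shows "tr a m ` e \<in> snd H"
proof -
  obtain x y where xy: "x \<noteq> y" "x \<in> fst H" "y \<in> fst H" "e = {x, y}"
    using sg e unfolding simple_graph_def by blast
  have sym: "adj H p q \<Longrightarrow> adj H q p" for p q by (simp add: adj_def insert_commute)
  have am: "a \<noteq> m" using va vm by auto
  have cl: "adj H p q" if "clique H A" "p \<in> A" "q \<in> A" "p \<noteq> q" for p q
    using that unfolding clique_def by blast
  have ind: "\<not> adj H p q" if "independent_set H A" "p \<in> A" "q \<in> A" for p q
    using that unfolding independent_set_def by blast
  have ctab: "adj H p q" if "p \<in> A" "q \<in> B" for p q
    using ct that unfolding complete_to_def by blast
  have exy: "adj H x y" using xy e by (simp add: adj_def)
  have img: "tr a m ` e = {tr a m x, tr a m y}" using xy by simp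
  have c1: "adj H m z" if "adj H a z" "z \<in> fst H" "z \<noteq> m" "z \<noteq> v" for z
  proof -
    have "z \<in> A \<or> z \<in> B" using that(2,4) V by blast
    thus ?thesis
    proof
      assume zA: "z \<in> A"
      hence "clique H A" using hom ind[OF _ aA zA] that(1) by blast
      thus ?thesis using cl[OF _ mA zA] that(3) by blast
    next
      assume "z \<in> B" thus ?thesis using ctab mA by blast
    qed
  qed
  have c2: "adj H a z" if "adj H m z" "z \<in> fst H" "z \<noteq> a" "z \<noteq> v" for z
  proof -
    have "z \<in> A \<or> z \<in> B" using that(2,4) V by blast
    thus ?thesis
    proof
      assume zA: "z \<in> A"
      hence "clique H A" using hom ind[OF _ mA zA] that(1) by blast
      thus ?thesis using cl[OF _ aA zA] that(3) by blast
    next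
      assume "z \<in> B" thus ?thesis using ctab aA by blast
    qed
  qed
  have nev: "\<not> (x = v \<and> y = a)" "\<not> (x = a \<and> y = v)" using ne xy by (auto simp: insert_commute)
  have vx: "x = v \<Longrightarrow> y \<noteq> m" using exy vm by blast
  have vy: "y = v \<Longrightarrow> x \<noteq> m" using exy vm sym by blast
  have tx: "tr a m x = (if x = a then m else if x = m then a else x)" by (simp add: tr_def)
  have ty: "tr a m y = (if y = a then m else if y = m then a else y)" by (simp add: tr_def)
  have "adj H (tr a m x) (tr a m y)"
  proof (cases "x = a \<or> x = m \<or> y = a \<or> y = m")
    case False thus ?thesis using exy tx ty by simp
  next
    case True
    thus ?thesis
    proof (elim disjE)
      assume xa: "x = a"
      show ?thesis
      proof (cases "y = m")
        case True thus ?thesis using xa exy sym tx ty am by simp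
      next
        case False
        have "y \<noteq> v" using nev xa by blast
        hence "adj H m y" using c1 xa exy xy False by blast
        thus ?thesis using xa False tx ty xy(1) by simp
      qed
    next
      assume xm: "x = m"
      show ?thesis
      proof (cases "y = a")
        case True thus ?thesis using xm exy sym tx ty am by simp
      next
        case False
        have "y \<noteq> v" using vy xm by blast
        hence "adj H a y" using c2 xm exy xy False by blast
        thus ?thesis using xm False tx ty xy(1) am by simp
      qed
    next
      assume ya: "y = a"
      show ?thesis
      proof (cases "x = m")
        case True thus ?thesis using ya exy sym tx ty am by simp
      next
        case False
        have "x \<noteq> v" using nev ya by blast
        hence "adj H m x" using c1 ya exy xy False sym by blast
        thus ?thesis using ya False tx ty xy(1) sym by simp
      qed
    next
      assume ym: "y = m"
      show ?thesis
      proof (cases "x = a")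
        case True thus ?thesis using ym exy sym tx ty am by simp
      next
        case False
        have "x \<noteq> v" using vx ym by blast
        hence "adj H a x" using c2 ym exy xy False sym by blast
        thus ?thesis using ym False tx ty xy(1) sym am by simp
      qed
    qed
  qed
  thus ?thesis using img by (simp add: adj_def)
qed

theorem mainTheorem5:
  fixes H F :: "'a graph" and A B :: "'a set" and v :: 'a
  assumes "simple_graph H"
    and "fst H = A \<union> B \<union> {v}"
    and "A \<inter> B = {}" and "v \<notin> A" and "v \<notin> B"
    and "independent_set H A \<or> clique H A"
    and "complete_to H A B"
    and "\<exists>a\<in>A. adj H v a"
    and "\<exists>a\<in>A. \<not> adj H v a"
    and "fst F = fst H"
    and "snd F \<subseteq> snd H"
    and "snd H - snd F \<subseteq> {{v, a} | a. a \<in> A}"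
  shows "inter_derives H F"
proof -
  obtain m where mA: "m \<in> A" and vm: "\<not> adj H v m" using assms(9) by blast
  define R where "R = {a \<in> A. {v, a} \<in> snd H \<and> {v, a} \<notin> snd F}"
  have "finite (fst H)" using assms(1) by (simp add: simple_graph_def)
  hence "finite R" unfolding R_def using assms(2) by (auto intro: finite_subset)
  then obtain rs where rs: "set rs = R" using finite_list by blast
  define \<alpha> where "\<alpha> = (\<lambda>i::nat. if i = 0 then id else tr (rs ! (i - 1)) m)"
  define k where "k = Suc (length rs)"
  have inj: "\<forall>i<k. inj_on (\<alpha> i) (fst H)"
    unfolding \<alpha>_def using tr_inj by (auto intro: inj_on_subset[OF tr_inj])
  have mV: "m \<in> fst H" using mA assms(2) by auto
  have RV: "a \<in> fst H" if "a \<in> R" for a using that assms(2) R_def by auto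
  have fstimg: "\<alpha> i ` fst H = fst H" if "i < k" for i
  proof (cases "i = 0")
    case True thus ?thesis by (simp add: \<alpha>_def)
  next
    case False
    hence "rs ! (i - 1) \<in> R" using that rs k_def by auto
    hence "tr (rs ! (i - 1)) m ` fst H = fst H" using RV mV by (intro tr_img) auto
    thus ?thesis using False by (simp add: \<alpha>_def)
  qed
  have Ri: "(\<exists>i. 0 < i \<and> i < k \<and> a = rs ! (i - 1)) \<longleftrightarrow> a \<in> R" for a
  proof
    assume "\<exists>i. 0 < i \<and> i < k \<and> a = rs ! (i - 1)"
    then obtain i where i: "0 < i" "i < k" "a = rs ! (i - 1)" by blast
    have "i - 1 < length rs" using i(1,2) unfolding k_def by linarith
    hence "rs ! (i - 1) \<in> set rs" by (rule nth_mem)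
    thus "a \<in> R" using rs i(3) by simp
  next
    assume "a \<in> R"
    then obtain j where j: "j < length rs" "a = rs ! j" using rs by (metis in_set_conv_nth)
    have "0 < Suc j \<and> Suc j < k \<and> a = rs ! (Suc j - 1)" using j unfolding k_def by simp
    thus "\<exists>i. 0 < i \<and> i < k \<and> a = rs ! (i - 1)" by blast
  qed
  have a0: "snd (graph_image (\<alpha> 0) H) = snd H" by (simp add: \<alpha>_def graph_image_def)
  have ai: "e \<in> snd (graph_image (\<alpha> i) H) \<longleftrightarrow> tr (rs ! (i - 1)) m ` e \<in> snd H" if "i \<noteq> 0" for i e
  proof -
    have "snd (graph_image (\<alpha> i) H) = (\<lambda>e. tr (rs ! (i - 1)) m ` e) ` snd H"
      using that by (simp add: \<alpha>_def graph_image_def)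
    thus ?thesis by (simp only: mem_img_tr)
  qed
  have k0: "0 < k" by (simp add: k_def)
  have sndI: "(\<forall>i<k. e \<in> snd (graph_image (\<alpha> i) H)) \<longleftrightarrow>
      e \<in> snd H \<and> (\<forall>a\<in>R. tr a m ` e \<in> snd H)" for e
  proof
    assume h: "\<forall>i<k. e \<in> snd (graph_image (\<alpha> i) H)"
    have "e \<in> snd (graph_image (\<alpha> 0) H)" using h k0 by simp
    hence "e \<in> snd H" by (simp only: a0)
    moreover have "tr a m ` e \<in> snd H" if aR: "a \<in> R" for a
    proof -
      have "\<exists>i. 0 < i \<and> i < k \<and> a = rs ! (i - 1)" using Ri[of a] aR by simp
      then obtain i where i: "0 < i" "i < k" "a = rs ! (i - 1)" by blast
      have "e \<in> snd (graph_image (\<alpha> i) H)" using h i(2) by simp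
      moreover have "i \<noteq> 0" using i(1) by simp
      ultimately show ?thesis using ai[of i e] i(3) by simp
    qed
    ultimately show "e \<in> snd H \<and> (\<forall>a\<in>R. tr a m ` e \<in> snd H)" by blast
  next
    assume h: "e \<in> snd H \<and> (\<forall>a\<in>R. tr a m ` e \<in> snd H)"
    show "\<forall>i<k. e \<in> snd (graph_image (\<alpha> i) H)"
    proof (intro allI impI)
      fix i assume i: "i < k"
      show "e \<in> snd (graph_image (\<alpha> i) H)"
      proof (cases "i = 0")
        case True thus ?thesis using h by (simp only: a0)
      next
        case False
        hence "rs ! (i - 1) \<in> R" using Ri[of "rs ! (i - 1)"] i by auto
        hence "tr (rs ! (i - 1)) m ` e \<in> snd H" using h by simp
        thus ?thesis using False ai[of i e] by simp
      qed
    qed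
  qed
  have sndF: "e \<in> snd F \<longleftrightarrow> e \<in> snd H \<and> (\<forall>a\<in>R. tr a m ` e \<in> snd H)" for e
  proof
    assume eF: "e \<in> snd F"
    have eH: "e \<in> snd H" using eF assms(11) by blast
    moreover have "tr a m ` e \<in> snd H" if aR: "a \<in> R" for a
    proof -
      have aA: "a \<in> A" and va: "adj H v a" and ne: "e \<noteq> {v, a}"
        using aR eF unfolding R_def adj_def by auto
      show ?thesis using key[OF assms(1-7) aA va mA vm eH ne] .
    qed
    ultimately show "e \<in> snd H \<and> (\<forall>a\<in>R. tr a m ` e \<in> snd H)" by blast
  next
    assume h: "e \<in> snd H \<and> (\<forall>a\<in>R. tr a m ` e \<in> snd H)"
    show "e \<in> snd F"
    proof (rule ccontr)
      assume "e \<notin> snd F"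
      then obtain a where aA: "a \<in> A" and ea: "e = {v, a}" using h assms(12) by blast
      have aR: "a \<in> R" using h ea aA \<open>e \<notin> snd F\<close> unfolding R_def by blast
      have "a \<noteq> m" using h ea vm aA unfolding adj_def by auto
      hence "tr a m ` e = {v, m}" using ea assms(4) aA mA unfolding tr_def by auto
      thus False using h aR vm unfolding adj_def by auto
    qed
  qed
  have "F = graph_Inter k (\<lambda>i. graph_image (\<alpha> i) H)"
  proof (rule prod_eqI)
    show "fst F = fst (graph_Inter k (\<lambda>i. graph_image (\<alpha> i) H))"
      using fstimg assms(10) by (auto simp: graph_Inter_def graph_image_def k_def)
    show "snd F = snd (graph_Inter k (\<lambda>i. graph_image (\<alpha> i) H))"
    proof -
      have "snd (graph_Inter k (\<lambda>i. graph_image (\<alpha> i) H)) = {e. \<forall>i<k. e \<in> snd (graph_image (\<alpha> i) H)}"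
        by (auto simp: graph_Inter_def)
      also have "\<dots> = snd F" using sndI sndF by blast
      finally show ?thesis by simp
    qed
  qed
  thus ?thesis unfolding inter_derives_def using inj by (intro exI[of _ k]) (auto simp: k_def)
qed

end
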